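(* In the $2^K$ factorial setup of the context, let $f\in\mathbb R^Q$, $f^\star=f[\mathbb M^\star]$, $v^2=f^\top V_{\hat Y}f$ and $v_{\mathrm R}^2=f^{\star\top}V_{\hat Y}f^\star$, and assume that both $\hat\gamma=f^\top\hat Y$ and $\hat\gamma_{\mathrm R}=f[\hat{\mathbb M}]^\top\hat Y$ (suitably standardized) converge to a normal distribution as $N\to\infty$. (i) If the eigenvectors of $V_{\hat Y}$ are given by the columns of the contrast matrix $G$ (i.e. $V_{\hat Y}=Q^{-1}G\Lambda G^\top$ for a diagonal $\Lambda$), then $v_{\mathrm R}^2/v^2\le1$. (ii) If $s^\star$ denotes the number of nonzero entries of $f$, then $v_{\mathrm R}^2/v^2\le\kappa(V_{\hat Y})\, s^\star|\mathbb M^\star|/Q$, where $\kappa(V)$ is the ratio of the largest to the smallest eigenvalue of $V$.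
   Context: $\mathcal T=\{0,1\}^K$, $Q=2^K$, lexicographic order. For $\mathcal K\subseteq[K]$, $g_{\mathcal K}(z)=\prod_{k\in\mathcal K}(2z_k-1)$, $g_\emptyset=\mathbf 1_Q$; $G$ the $Q\times Q$ matrix of columns $g_{\mathcal K}$ ($G^\top G=QI_Q$). For a set $\mathbb M$ of subsets of $[K]$, $f[\mathbb M]=Q^{-1}G(\cdot,\mathbb M)G(\cdot,\mathbb M)^\top f$, with $G(\cdot,\mathbb M)$ the columns indexed by $\mathbb M$. $N$ units with potential outcomes $Y_i(z)$, means $\bar Y(z)$, factorial effects $\tau_{\mathcal K}=Q^{-1}g_{\mathcal K}^\top\bar Y$; $\mathbb M^\star=\{\emptyset\}\cup\{\mathcal K\ne\emptyset:\tau_{\mathcal K}\neq0\}$. Completely randomized design with $N(z)\ge2$ units at level $z$; $\hat Y=(\hat Y(z))_z$ the vector of arm-wise sample means, $V_{\hat Y}$ its covariance matrix (assumed nonsingular). $\hat{\mathbb M}$ is a data-selected working model (output of forward screening). *)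

theory Defs
  imports Complex_Main
begin

text \<open>Treatment levels z in {0,1}^K are encoded as boolean lists of length K
  (True = 1). Factors are indexed 0..K-1, so [K] = {0..<K}. Vectors in R^Q are
  functions on levels K, matrices are functions of two levels.\<close>

definition levels :: "nat \<Rightarrow> bool list set" where
  "levels K = {z. length z = K}"

definition Qn :: "nat \<Rightarrow> nat" where
  "Qn K = 2 ^ K"

definition gvec :: "nat set \<Rightarrow> bool list \<Rightarrow> real" where
  "gvec KK z = (\<Prod>k\<in>KK. 2 * of_bool (z ! k) - 1)"

text \<open>f[M] = Q^{-1} G(.,M) G(.,M)^T f\<close>
definition proj :: "nat \<Rightarrow> nat set set \<Rightarrow> (bool list \<Rightarrow> real) \<Rightarrow> bool list \<Rightarrow> real" where
  "proj K M f z = (1 / real (Qn K)) *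
     (\<Sum>KK\<in>M. gvec KK z * (\<Sum>z'\<in>levels K. gvec KK z' * f z'))"

text \<open>Population: N units 0..<N, potential outcomes Y i z.\<close>
definition Ybar :: "nat \<Rightarrow> (nat \<Rightarrow> bool list \<Rightarrow> real) \<Rightarrow> bool list \<Rightarrow> real" where
  "Ybar N Y z = (\<Sum>i<N. Y i z) / real N"

definition tau :: "nat \<Rightarrow> nat \<Rightarrow> (nat \<Rightarrow> bool list \<Rightarrow> real) \<Rightarrow> nat set \<Rightarrow> real" where
  "tau K N Y KK = (\<Sum>z\<in>levels K. gvec KK z * Ybar N Y z) / real (Qn K)"

definition Mstar :: "nat \<Rightarrow> nat \<Rightarrow> (nat \<Rightarrow> bool list \<Rightarrow> real) \<Rightarrow> nat set set" where
  "Mstar K N Y = {{}} \<union> {KK. KK \<subseteq> {0..<K} \<and> KK \<noteq> {} \<and> tau K N Y KK \<noteq> 0}"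

text \<open>Completely randomized design: all assignments of the N units to levels with
  exactly n z units at level z, each equally likely. Assignments are normalised
  to [] outside the unit range so that the set is finite.\<close>
definition assignments :: "nat \<Rightarrow> nat \<Rightarrow> (bool list \<Rightarrow> nat) \<Rightarrow> (nat \<Rightarrow> bool list) set" where
  "assignments K N n = {W. (\<forall>i<N. W i \<in> levels K) \<and> (\<forall>i. N \<le> i \<longrightarrow> W i = [])
       \<and> (\<forall>z\<in>levels K. card {i\<in>{..<N}. W i = z} = n z)}"

definition Yhat :: "nat \<Rightarrow> (bool list \<Rightarrow> nat) \<Rightarrow> (nat \<Rightarrow> bool list \<Rightarrow> real)
     \<Rightarrow> (nat \<Rightarrow> bool list) \<Rightarrow> bool list \<Rightarrow> real" where
  "Yhat N n Y W z = (\<Sum>i\<in>{i\<in>{..<N}. W i = z}. Y i z) / real (n z)"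

definition Erand :: "nat \<Rightarrow> nat \<Rightarrow> (bool list \<Rightarrow> nat) \<Rightarrow> ((nat \<Rightarrow> bool list) \<Rightarrow> real) \<Rightarrow> real" where
  "Erand K N n h = (\<Sum>W\<in>assignments K N n. h W) / real (card (assignments K N n))"

definition VYhat :: "nat \<Rightarrow> nat \<Rightarrow> (bool list \<Rightarrow> nat) \<Rightarrow> (nat \<Rightarrow> bool list \<Rightarrow> real)
     \<Rightarrow> bool list \<Rightarrow> bool list \<Rightarrow> real" where
  "VYhat K N n Y z z' =
     Erand K N n (\<lambda>W. (Yhat N n Y W z - Erand K N n (\<lambda>W'. Yhat N n Y W' z)) *
                      (Yhat N n Y W z' - Erand K N n (\<lambda>W'. Yhat N n Y W' z')))"

definition mat_vec :: "nat \<Rightarrow> (bool list \<Rightarrow> bool list \<Rightarrow> real) \<Rightarrow> (bool list \<Rightarrow> real) \<Rightarrow> bool list \<Rightarrow> real" where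
  "mat_vec K V x z = (\<Sum>z'\<in>levels K. V z z' * x z')"

definition nonsingular :: "nat \<Rightarrow> (bool list \<Rightarrow> bool list \<Rightarrow> real) \<Rightarrow> bool" where
  "nonsingular K V \<longleftrightarrow>
     (\<forall>x. (\<forall>z\<in>levels K. mat_vec K V x z = 0) \<longrightarrow> (\<forall>z\<in>levels K. x z = 0))"

definition eigenvalues :: "nat \<Rightarrow> (bool list \<Rightarrow> bool list \<Rightarrow> real) \<Rightarrow> real set" where
  "eigenvalues K V = {c. \<exists>x. (\<exists>z\<in>levels K. x z \<noteq> 0) \<and>
                           (\<forall>z\<in>levels K. mat_vec K V x z = c * x z)}"

definition kappa :: "nat \<Rightarrow> (bool list \<Rightarrow> bool list \<Rightarrow> real) \<Rightarrow> real" where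
  "kappa K V = Max (eigenvalues K V) / Min (eigenvalues K V)"

definition quad :: "nat \<Rightarrow> (bool list \<Rightarrow> bool list \<Rightarrow> real) \<Rightarrow> (bool list \<Rightarrow> real) \<Rightarrow> real" where
  "quad K V x = (\<Sum>z\<in>levels K. \<Sum>z'\<in>levels K. x z * V z z' * x z')"

end

theory Submission
  imports Defs "HOL-Analysis.Analysis"
begin

lemma finite_levels[simp]: "finite (levels K)"
proof -
  have "levels K = {xs. set xs \<subseteq> UNIV \<and> length xs = K}" by (auto simp: levels_def)
  then show ?thesis using finite_lists_length_eq[of "UNIV::bool set" K] by simp
qed

lemma levels_ne: "replicate K False \<in> levels K"
  by (simp add: levels_def)

lemma card_levels: "card (levels K) = Qn K"
proof -
  have "levels K = {xs. set xs \<subseteq> UNIV \<and> length xs = K}" by (auto simp: levels_def)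
  then show ?thesis using card_lists_length_eq[of "UNIV::bool set" K] by (simp add: Qn_def)
qed

lemma levels_Suc: "levels (Suc K) = (\<lambda>z. z @ [True]) ` levels K \<union> (\<lambda>z. z @ [False]) ` levels K"
proof (rule set_eqI, rule iffI)
  fix x assume "x \<in> levels (Suc K)"
  then have l: "length x = Suc K" by (simp add: levels_def)
  then obtain z b where "x = z @ [b]" by (metis length_Suc_conv_rev)
  then show "x \<in> (\<lambda>z. z @ [True]) ` levels K \<union> (\<lambda>z. z @ [False]) ` levels K"
    using l by (cases b) (auto simp: levels_def)
qed (auto simp: levels_def)

lemma sum_levels_Suc:
  "(\<Sum>z\<in>levels (Suc K). F z) = (\<Sum>z\<in>levels K. F (z @ [True]) + F (z @ [False]))"
proof -
  have d: "(\<lambda>z. z @ [True]) ` levels K \<inter> (\<lambda>z. z @ [False]) ` levels K = {}" by auto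
  have i1: "inj_on (\<lambda>z. z @ [True]) (levels K)" by (auto simp: inj_on_def)
  have i2: "inj_on (\<lambda>z. z @ [False]) (levels K)" by (auto simp: inj_on_def)
  show ?thesis
    unfolding levels_Suc
    by (simp add: sum.union_disjoint[OF _ _ d] sum.reindex[OF i1] sum.reindex[OF i2] sum.distrib)
qed

lemma gvec_snoc:
  assumes "C \<subseteq> {0..<Suc K}" "z \<in> levels K"
  shows "gvec C (z @ [b]) = gvec (C - {K}) z * (if K \<in> C then 2 * of_bool b - 1 else 1)"
proof -
  have fin: "finite C" using assms(1) finite_subset by blast
  have len: "length z = K" using assms(2) by (simp add: levels_def)
  have nk: "(z @ [b]) ! K = b" using len by (simp add: nth_append)
  have eq: "(\<Prod>k\<in>C - {K}. 2 * of_bool ((z @ [b]) ! k) - 1) = gvec (C - {K}) z"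
    unfolding gvec_def
  proof (rule prod.cong)
    fix k assume "k \<in> C - {K}"
    then have "k < length z" using assms(1) len by auto
    then show "2 * of_bool ((z @ [b]) ! k) - 1 = 2 * of_bool (z ! k) - (1::real)"
      by (simp add: nth_append)
  qed simp
  show ?thesis
  proof (cases "K \<in> C")
    case True
    have "gvec C (z @ [b]) = (2 * of_bool ((z @ [b]) ! K) - 1) * (\<Prod>k\<in>C - {K}. 2 * of_bool ((z @ [b]) ! k) - 1)"
      unfolding gvec_def by (rule prod.remove[OF fin True])
    then show ?thesis using True by (simp only: eq nk if_True mult.commute)
  next
    case False
    then have "C - {K} = C" by blast
    then show ?thesis using eq False by (simp add: gvec_def)
  qed
qed

lemma gvec_sum:
  "C \<subseteq> {0..<K} \<Longrightarrow> (\<Sum>z\<in>levels K. gvec C z) = (if C = {} then real (Qn K) else 0)"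
proof (induction K arbitrary: C)
  case 0
  then have "C = {}" by auto
  moreover have "levels 0 = {[]}" by (auto simp: levels_def)
  ultimately show ?case by (simp add: gvec_def Qn_def)
next
  case (Suc K)
  have C': "C - {K} \<subseteq> {0..<K}" using Suc.prems by auto
  have "(\<Sum>z\<in>levels (Suc K). gvec C z) =
     (\<Sum>z\<in>levels K. gvec (C - {K}) z * ((if K \<in> C then 1 else 1) + (if K \<in> C then -1 else 1)))"
    unfolding sum_levels_Suc
    by (rule sum.cong) (auto simp: gvec_snoc[OF Suc.prems] algebra_simps)
  also have "\<dots> = (if K \<in> C then 0 else 2 * (\<Sum>z\<in>levels K. gvec (C - {K}) z))"
    by (auto simp: sum_distrib_right[symmetric] mult.commute)
  also have "\<dots> = (if C = {} then real (Qn (Suc K)) else 0)"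
  proof (cases "K \<in> C")
    case False
    then have e: "C - {K} = C" by auto
    have IH: "sum (gvec C) (levels K) = (if C = {} then real (Qn K) else 0)"
      using Suc.IH[OF C'] unfolding e .
    show ?thesis unfolding e using IH False by (simp add: Qn_def)
  next
    case True
    then have "C \<noteq> {}" by blast
    then show ?thesis using True by (simp only: if_True if_False)
  qed
  finally show ?case .
qed

lemma gvec_sq: "gvec A z * gvec A z = 1"
  unfolding gvec_def prod.distrib[symmetric]
  by (rule prod.neutral) auto

lemma gvec_mult:
  assumes "finite A" "finite B"
  shows "gvec A z * gvec B z = gvec ((A - B) \<union> (B - A)) z"
proof -
  have a: "A = (A - B) \<union> (A \<inter> B)" and b: "B = (B - A) \<union> (A \<inter> B)" by auto
  have "gvec A z = gvec (A - B) z * gvec (A \<inter> B) z"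
    unfolding gvec_def using assms by (subst a) (rule prod.union_disjoint, auto)
  moreover have "gvec B z = gvec (B - A) z * gvec (A \<inter> B) z"
    unfolding gvec_def using assms by (subst b) (rule prod.union_disjoint, auto)
  moreover have "gvec ((A - B) \<union> (B - A)) z = gvec (A - B) z * gvec (B - A) z"
    unfolding gvec_def by (rule prod.union_disjoint) (use assms in auto)
  ultimately show ?thesis using gvec_sq[of "A \<inter> B" z]
    by (metis (no_types, lifting) mult.assoc mult.commute mult.left_commute mult_1_right)
qed

lemma gvec_orth:
  assumes "A \<subseteq> {0..<K}" "B \<subseteq> {0..<K}"
  shows "(\<Sum>z\<in>levels K. gvec A z * gvec B z) = (if A = B then real (Qn K) else 0)"
proof -
  have f: "finite A" "finite B" using assms finite_subset by blast+
  have "(\<Sum>z\<in>levels K. gvec A z * gvec B z) = (\<Sum>z\<in>levels K. gvec ((A - B) \<union> (B - A)) z)"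
    using gvec_mult[OF f] by simp
  also have "\<dots> = (if (A - B) \<union> (B - A) = {} then real (Qn K) else 0)"
    by (rule gvec_sum) (use assms in auto)
  also have "((A - B) \<union> (B - A) = {}) = (A = B)" by auto
  finally show ?thesis .
qed

lemma abs_gvec: "\<bar>gvec A z\<bar> = 1"
  unfolding gvec_def abs_prod by (rule prod.neutral) auto

definition ip :: "nat \<Rightarrow> (bool list \<Rightarrow> real) \<Rightarrow> (bool list \<Rightarrow> real) \<Rightarrow> real" where
  "ip K a b = (\<Sum>z\<in>levels K. a z * b z)"

definition bil :: "nat \<Rightarrow> (bool list \<Rightarrow> bool list \<Rightarrow> real) \<Rightarrow> (bool list \<Rightarrow> real) \<Rightarrow> (bool list \<Rightarrow> real) \<Rightarrow> real" where
  "bil K V x w = (\<Sum>z\<in>levels K. \<Sum>z'\<in>levels K. x z * V z z' * w z')"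

definition symm :: "nat \<Rightarrow> (bool list \<Rightarrow> bool list \<Rightarrow> real) \<Rightarrow> bool" where
  "symm K V \<longleftrightarrow> (\<forall>z\<in>levels K. \<forall>z'\<in>levels K. V z z' = V z' z)"

lemma quad_bil: "quad K V x = bil K V x x"
  by (simp add: quad_def bil_def)

lemma bil_sym: "symm K V \<Longrightarrow> bil K V w x = bil K V x w"
  unfolding bil_def symm_def
  by (subst sum.swap) (auto intro!: sum.cong simp: mult_ac)

lemma quad_add:
  "quad K V (\<lambda>z. x z + t * w z) = quad K V x + t * (bil K V x w + bil K V w x) + t\<^sup>2 * quad K V w"
  unfolding quad_def bil_def
  by (simp add: algebra_simps power2_eq_square sum.distrib sum_distrib_left)

lemma ip_add:
  "ip K (\<lambda>z. x z + t * w z) (\<lambda>z. x z + t * w z) = ip K x x + 2 * t * ip K x w + t\<^sup>2 * ip K w w"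
  unfolding ip_def
  by (simp add: algebra_simps power2_eq_square sum.distrib sum_distrib_left)

lemma quad_psd_gen:
  assumes V: "\<And>z z'. V z z' = (\<Sum>W\<in>A. a z W * a z' W) / c" and c: "c \<ge> 0"
  shows "quad K V x \<ge> 0"
proof -
  have "quad K V x = (\<Sum>W\<in>A. (\<Sum>z\<in>levels K. x z * a z W) * (\<Sum>z'\<in>levels K. x z' * a z' W)) / c"
  proof -
    have "(\<Sum>W\<in>A. (\<Sum>z\<in>levels K. x z * a z W) * (\<Sum>z'\<in>levels K. x z' * a z' W))
        = (\<Sum>W\<in>A. \<Sum>z\<in>levels K. \<Sum>z'\<in>levels K. x z * a z W * (x z' * a z' W))"
      by (simp add: sum_product)
    also have "\<dots> = (\<Sum>z\<in>levels K. \<Sum>W\<in>A. \<Sum>z'\<in>levels K. x z * a z W * (x z' * a z' W))"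
      by (rule sum.swap)
    also have "\<dots> = (\<Sum>z\<in>levels K. \<Sum>z'\<in>levels K. \<Sum>W\<in>A. x z * a z W * (x z' * a z' W))"
      by (rule sum.cong[OF refl], rule sum.swap)
    also have "\<dots> = (\<Sum>z\<in>levels K. \<Sum>z'\<in>levels K. x z * (\<Sum>W\<in>A. a z W * a z' W) * x z')"
      by (simp add: sum_distrib_left sum_distrib_right mult_ac)
    finally have ch: "(\<Sum>W\<in>A. (\<Sum>z\<in>levels K. x z * a z W) * (\<Sum>z'\<in>levels K. x z' * a z' W))
        = (\<Sum>z\<in>levels K. \<Sum>z'\<in>levels K. x z * (\<Sum>W\<in>A. a z W * a z' W) * x z')" .
    have e: "(\<Sum>z\<in>levels K. \<Sum>z'\<in>levels K. x z * (\<Sum>W\<in>A. a z W * a z' W) * x z') / c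
       = (\<Sum>W\<in>A. (\<Sum>z\<in>levels K. x z * a z W) * (\<Sum>z'\<in>levels K. x z' * a z' W)) / c" by (simp only: ch)
    have "quad K V x = (\<Sum>z\<in>levels K. \<Sum>z'\<in>levels K. x z * (\<Sum>W\<in>A. a z W * a z' W) * x z' / c)"
      unfolding quad_def V by simp
    also have "\<dots> = (\<Sum>z\<in>levels K. \<Sum>z'\<in>levels K. x z * (\<Sum>W\<in>A. a z W * a z' W) * x z') / c"
      by (simp add: sum_divide_distrib)
    finally show ?thesis using e by simp
  qed
  also have "\<dots> \<ge> 0"
    by (rule divide_nonneg_nonneg[OF sum_nonneg c]) (simp add: power2_eq_square[symmetric])
  finally show ?thesis .
qed

lemma VYhat_psd: "quad K (VYhat K N n Y) x \<ge> 0"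
  by (rule quad_psd_gen[where A = "assignments K N n" and c = "real (card (assignments K N n))"
      and a = "\<lambda>z W. Yhat N n Y W z - Erand K N n (\<lambda>W'. Yhat N n Y W' z)"])
     (unfold VYhat_def Erand_def, simp_all)

lemma VYhat_symm: "symm K (VYhat K N n Y)"
  by (simp add: symm_def VYhat_def mult.commute)

lemma quadratic_zero:
  fixes b P :: real
  assumes P: "P \<ge> 0" and h: "\<And>t. 2 * t * b + t\<^sup>2 * P \<ge> 0"
  shows "b = 0"
proof (rule ccontr)
  assume "b \<noteq> 0"
  define t where "t = - b / (P + 1)"
  have tp: "t * (P + 1) = - b" using P unfolding t_def by (simp add: field_simps)
  have "(P + 1)\<^sup>2 * (2 * t * b + t\<^sup>2 * P) = 2 * b * (t * (P + 1)) * (P + 1) + (t * (P + 1))\<^sup>2 * P"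
    by (simp add: algebra_simps power2_eq_square)
  also have "\<dots> = - (b\<^sup>2 * (P + 2))" unfolding tp by (simp add: algebra_simps power2_eq_square)
  finally have e: "(P + 1)\<^sup>2 * (2 * t * b + t\<^sup>2 * P) = - (b\<^sup>2 * (P + 2))" .
  moreover have "b\<^sup>2 * (P + 2) > 0" using \<open>b \<noteq> 0\<close> P by simp
  moreover have "(P + 1)\<^sup>2 > 0" using P by simp
  moreover have "(P + 1)\<^sup>2 * (2 * t * b + t\<^sup>2 * P) \<ge> 0" using h[of t] by simp
  ultimately show False by linarith
qed

lemma cont_coord[continuous_intros]: "continuous_on S (\<lambda>x::'a \<Rightarrow> real. x i)"
  by (rule continuous_on_subset[OF continuous_on_product_coordinates]) simp

lemma ip_restrict: "ip K (\<lambda>z. if z \<in> levels K then x z else 0) (\<lambda>z. if z \<in> levels K then x z else 0) = ip K x x"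
  unfolding ip_def by (rule sum.cong) auto

lemma sphere_compact:
  "compact ({x::bool list \<Rightarrow> real. \<forall>z. x z \<in> (if z \<in> levels K then {-1..1} else {0})}
      \<inter> {x. (\<Sum>z\<in>levels K. x z * x z) = 1})"
proof (rule compact_Int_closed)
  let ?S = "\<lambda>z. if z \<in> levels K then {-1..1::real} else {0}"
  have "compactin (product_topology (\<lambda>_. euclidean) UNIV) (PiE UNIV ?S)"
    by (subst compactin_PiE) auto
  then have "compact (Pi UNIV ?S)"
    by (simp add: euclidean_product_topology PiE_UNIV_domain)
  moreover have "Pi UNIV ?S = {x. \<forall>z. x z \<in> ?S z}" by (auto simp: Pi_def)
  ultimately show "compact {x::bool list \<Rightarrow> real. \<forall>z. x z \<in> ?S z}" by simp
  show "closed {x::bool list \<Rightarrow> real. (\<Sum>z\<in>levels K. x z * x z) = 1}"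
    by (rule closed_Collect_eq) (intro continuous_intros)+
qed

lemma quad_scale: "quad K V (\<lambda>z. c * x z) = c\<^sup>2 * quad K V x"
  unfolding quad_def by (simp add: sum_distrib_left algebra_simps power2_eq_square)

lemma quad_restrict: "quad K V (\<lambda>z. if z \<in> levels K then x z else 0) = quad K V x"
  unfolding quad_def by (intro sum.cong refl) auto

lemma rayleigh_max:
  assumes sym: "symm K V"
  shows "\<exists>u lam. ip K u u = 1 \<and> (\<forall>x. quad K V x \<le> lam * ip K x x)
           \<and> (\<forall>z\<in>levels K. mat_vec K V u z = lam * u z)"
proof -
  define T where "T = {x::bool list \<Rightarrow> real. \<forall>z. x z \<in> (if z \<in> levels K then {-1..1} else {0})}
      \<inter> {x. (\<Sum>z\<in>levels K. x z * x z) = 1}"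
  have cT: "compact T" unfolding T_def by (rule sphere_compact)
  define z0 where "z0 = replicate K False"
  have z0: "z0 \<in> levels K" unfolding z0_def by (rule levels_ne)
  have "(\<lambda>z. if z = z0 then 1 else 0) \<in> T"
    unfolding T_def using z0 by (auto simp: if_distrib[of "\<lambda>a. a * _"] cong: if_cong)
  then have neT: "T \<noteq> {}" by blast
  have cq: "continuous_on T (quad K V)"
    unfolding quad_def by (intro continuous_intros)
  obtain u where uT: "u \<in> T" and umax: "\<And>y. y \<in> T \<Longrightarrow> quad K V y \<le> quad K V u"
    using continuous_attains_sup[OF cT neT cq] by blast
  define lam where "lam = quad K V u"
  have u1: "ip K u u = 1" using uT by (simp add: T_def ip_def)
  have bound: "quad K V x \<le> lam * ip K x x" for x
  proof (cases "ip K x x = 0")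
    case True
    have "\<forall>z\<in>levels K. x z * x z = 0"
      using True unfolding ip_def by (subst (asm) sum_nonneg_eq_0_iff) auto
    then have "(\<lambda>z. if z \<in> levels K then x z else 0) = (\<lambda>z. 0 * x z)" by auto
    then have "quad K V x = 0" using quad_restrict[of K V x] quad_scale[of K V 0 x] by simp
    then show ?thesis using True by simp
  next
    case False
    have pos: "ip K x x > 0" using False unfolding ip_def
      by (metis (no_types, lifting) less_eq_real_def sum_nonneg zero_le_square)
    define s where "s = sqrt (ip K x x)"
    have s: "s > 0" "s * s = ip K x x" using pos unfolding s_def by (auto simp: real_sqrt_mult[symmetric])
    define y where "y = (\<lambda>z. if z \<in> levels K then x z / s else 0)"
    have yT: "y \<in> T"
    proof -
      have sq: "(\<Sum>z\<in>levels K. y z * y z) = 1"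
      proof -
        have "(\<Sum>z\<in>levels K. y z * y z) = (\<Sum>z\<in>levels K. x z * x z) / (s * s)"
          unfolding y_def sum_divide_distrib by (intro sum.cong) auto
        then show ?thesis using s pos unfolding ip_def by simp
      qed
      have "y z \<in> {-1..1}" if "z \<in> levels K" for z
      proof -
        have "y z * y z \<le> (\<Sum>z\<in>levels K. y z * y z)"
          by (rule member_le_sum) (use that in auto)
        then have "\<bar>y z\<bar> \<le> 1" using sq by (simp add: abs_le_square_iff power2_eq_square[symmetric] abs_square_le_1)
        then show ?thesis by auto
      qed
      then show ?thesis unfolding T_def using sq by (auto simp: y_def)
    qed
    have "quad K V y = (1 / s)\<^sup>2 * quad K V x"
    proof -
      have "y = (\<lambda>z. if z \<in> levels K then (1/s) * x z else 0)" unfolding y_def by auto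
      then show ?thesis using quad_restrict[of K V "\<lambda>z. (1/s) * x z"] quad_scale[of K V "1/s" x] by simp
    qed
    then have "quad K V x / (s * s) \<le> lam" using umax[OF yT] unfolding lam_def
      by (simp add: power2_eq_square)
    then show ?thesis using s pos by (simp add: divide_le_eq mult.commute)
  qed
  have eig: "mat_vec K V u z = lam * u z" if z: "z \<in> levels K" for z
  proof -
    define w where "w = (\<lambda>z'. if z' = z then 1 else (0::real))"
    define P where "P = lam * ip K w w - quad K V w"
    define b where "b = lam * ip K u w - bil K V u w"
    have P0: "P \<ge> 0" using bound[of w] unfolding P_def by simp
    have "2 * t * b + t\<^sup>2 * P \<ge> 0" for t
    proof -
      have "quad K V (\<lambda>z. u z + t * w z) \<le> lam * ip K (\<lambda>z. u z + t * w z) (\<lambda>z. u z + t * w z)"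
        by (rule bound)
      then show ?thesis
        unfolding quad_add ip_add bil_sym[OF sym, of w u] P_def b_def
        using u1 lam_def by (simp add: algebra_simps)
    qed
    then have b0: "b = 0" by (rule quadratic_zero[OF P0])
    have "ip K u w = u z" unfolding ip_def w_def using z by (simp add: if_distrib cong: if_cong)
    moreover have "bil K V u w = mat_vec K V u z"
    proof -
      have "bil K V u w = (\<Sum>z1\<in>levels K. u z1 * V z1 z)"
        unfolding bil_def w_def using z by (simp add: if_distrib cong: if_cong)
      also have "\<dots> = mat_vec K V u z"
        unfolding mat_vec_def using sym z unfolding symm_def by (intro sum.cong) auto
      finally show ?thesis .
    qed
    ultimately show ?thesis using b0 unfolding b_def by simp
  qed
  show ?thesis using u1 bound eig by blast
qed

lemma eig_quad:
  assumes "\<forall>z\<in>levels K. mat_vec K V x z = c * x z"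
  shows "quad K V x = c * ip K x x"
proof -
  have "quad K V x = (\<Sum>z\<in>levels K. x z * mat_vec K V x z)"
    unfolding quad_def mat_vec_def by (simp add: sum_distrib_left mult_ac)
  also have "\<dots> = (\<Sum>z\<in>levels K. c * (x z * x z))" using assms by (intro sum.cong) auto
  finally show ?thesis by (simp add: ip_def sum_distrib_left)
qed

lemma ip_nonneg: "ip K x x \<ge> 0"
  unfolding ip_def by (rule sum_nonneg) simp

lemma ip_pos: "z \<in> levels K \<Longrightarrow> x z \<noteq> 0 \<Longrightarrow> ip K x x > 0"
proof -
  assume z: "z \<in> levels K" and xz: "x z \<noteq> 0"
  have "0 < (x z)\<^sup>2" using xz by simp
  then have "0 < x z * x z" by (simp add: power2_eq_square)
  then show ?thesis unfolding ip_def
    by (intro sum_pos2[of _ z]) (use z in auto)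
qed

lemma ip_ind:
  assumes "z \<in> levels K"
  shows "ip K (\<lambda>z'. if z' = z then 1 else 0) y = y z"
proof -
  have "ip K (\<lambda>z'. if z' = z then 1 else 0) y = (\<Sum>z'\<in>levels K. if z' = z then y z' else 0)"
    unfolding ip_def by (rule sum.cong) auto
  also have "\<dots> = y z" using assms by simp
  finally show ?thesis .
qed

lemma ip_zero: "ip K x x = 0 \<Longrightarrow> z \<in> levels K \<Longrightarrow> x z = 0"
  using ip_pos by fastforce

lemma rayleigh_min:
  assumes sym: "symm K V"
  shows "\<exists>u lam. ip K u u = 1 \<and> (\<forall>x. lam * ip K x x \<le> quad K V x)
           \<and> (\<forall>z\<in>levels K. mat_vec K V u z = lam * u z)"
proof -
  have "symm K (\<lambda>z z'. - V z z')" using sym by (simp add: symm_def)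
  from rayleigh_max[OF this] obtain u lam where
    u: "ip K u u = 1" "\<forall>x. quad K (\<lambda>z z'. - V z z') x \<le> lam * ip K x x"
       "\<forall>z\<in>levels K. mat_vec K (\<lambda>z z'. - V z z') u z = lam * u z" by blast
  have q: "quad K (\<lambda>z z'. - V z z') x = - quad K V x" for x
    unfolding quad_def by (simp add: sum_negf)
  have m: "mat_vec K (\<lambda>z z'. - V z z') u z = - mat_vec K V u z" for z
    unfolding mat_vec_def by (simp add: sum_negf)
  have a: "- lam * ip K x x \<le> quad K V x" for x
    using u(2)[rule_format, of x] q[of x] by simp
  have b: "mat_vec K V u z = - lam * u z" if "z \<in> levels K" for z
    using u(3)[rule_format, OF that] m[of z] by simp
  show ?thesis
    by (rule exI[of _ u], rule exI[of _ "- lam"]) (use u(1) a b in blast)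
qed

lemma eig_orth:
  assumes sym: "symm K V"
    and x: "\<forall>z\<in>levels K. mat_vec K V x z = c * x z"
    and y: "\<forall>z\<in>levels K. mat_vec K V y z = d * y z"
    and cd: "c \<noteq> d"
  shows "ip K x y = 0"
proof -
  have "c * ip K x y = bil K V y x"
  proof -
    have "c * ip K x y = (\<Sum>z\<in>levels K. mat_vec K V x z * y z)"
      unfolding ip_def sum_distrib_left using x by (intro sum.cong) auto
    also have "\<dots> = bil K V y x"
      unfolding mat_vec_def bil_def sum_distrib_right by (intro sum.cong refl) (simp add: mult_ac)
    finally show ?thesis .
  qed
  moreover have "d * ip K x y = bil K V x y"
  proof -
    have "d * ip K x y = (\<Sum>z\<in>levels K. x z * mat_vec K V y z)"
      unfolding ip_def sum_distrib_left using y by (intro sum.cong) auto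
    also have "\<dots> = bil K V x y"
      unfolding mat_vec_def bil_def sum_distrib_left by (intro sum.cong refl) (simp add: mult_ac)
    finally show ?thesis .
  qed
  ultimately have "c * ip K x y = d * ip K x y" using bil_sym[OF sym] by simp
  then show ?thesis using cd by simp
qed

lemma ip_comm: "ip K x y = ip K y x"
  unfolding ip_def by (simp add: mult.commute)

lemma ip_lin:
  "ip K x (\<lambda>z. \<Sum>c\<in>F. a c * v c z) = (\<Sum>c\<in>F. a c * ip K x (v c))"
  unfolding ip_def sum_distrib_left by (subst sum.swap) (simp add: mult_ac)

lemma bessel:
  assumes fin: "finite F"
    and on: "\<And>c d. c \<in> F \<Longrightarrow> d \<in> F \<Longrightarrow> ip K (v c) (v d) = (if c = d then 1 else 0)"
  shows "(\<Sum>c\<in>F. (ip K x (v c))\<^sup>2) \<le> ip K x x"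
proof -
  define a where "a c = ip K x (v c)" for c
  define y where "y = (\<lambda>z. \<Sum>c\<in>F. a c * v c z)"
  have xy: "ip K x y = (\<Sum>c\<in>F. (a c)\<^sup>2)"
    unfolding y_def ip_lin a_def by (simp add: power2_eq_square)
  have vy: "ip K (v c) y = a c" if "c \<in> F" for c
  proof -
    have "ip K (v c) y = (\<Sum>d\<in>F. a d * (if c = d then 1 else 0))"
      unfolding y_def ip_lin using on that by (intro sum.cong) auto
    also have "\<dots> = a c" using fin that by (simp add: if_distrib cong: if_cong)
    finally show ?thesis .
  qed
  have yy: "ip K y y = (\<Sum>c\<in>F. (a c)\<^sup>2)"
  proof -
    have "ip K y y = (\<Sum>c\<in>F. a c * ip K y (v c))"
      by (subst (2) y_def) (rule ip_lin)
    also have "\<dots> = (\<Sum>c\<in>F. (a c)\<^sup>2)"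
      using vy by (intro sum.cong refl) (simp add: ip_comm[of K y] power2_eq_square)
    finally show ?thesis .
  qed
  have "0 \<le> ip K (\<lambda>z. x z + (-1) * y z) (\<lambda>z. x z + (-1) * y z)" by (rule ip_nonneg)
  also have "\<dots> = ip K x x - 2 * ip K x y + ip K y y" unfolding ip_add by simp
  finally show ?thesis using xy yy a_def by simp
qed

lemma orthonormal_card:
  assumes fin: "finite F"
    and on: "\<And>c d. c \<in> F \<Longrightarrow> d \<in> F \<Longrightarrow> ip K (v c) (v d) = (if c = d then 1 else 0)"
  shows "card F \<le> Qn K"
proof -
  have "real (card F) = (\<Sum>c\<in>F. ip K (v c) (v c))" using on by simp
  also have "\<dots> = (\<Sum>z\<in>levels K. \<Sum>c\<in>F. (ip K (\<lambda>z'. if z' = z then 1 else 0) (v c))\<^sup>2)"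
  proof -
    have "(\<Sum>c\<in>F. ip K (v c) (v c)) = (\<Sum>z\<in>levels K. \<Sum>c\<in>F. v c z * v c z)"
      unfolding ip_def by (rule sum.swap)
    also have "\<dots> = (\<Sum>z\<in>levels K. \<Sum>c\<in>F. (ip K (\<lambda>z'. if z' = z then 1 else 0) (v c))\<^sup>2)"
      by (intro sum.cong refl) (simp add: ip_ind power2_eq_square)
    finally show ?thesis .
  qed
  also have "\<dots> \<le> (\<Sum>z\<in>levels K. ip K (\<lambda>z'. if z' = z then 1 else 0) (\<lambda>z'. if z' = z then 1 else 0))"
    by (intro sum_mono bessel[OF fin on])
  also have "\<dots> = (\<Sum>z\<in>levels K. 1)"
    by (intro sum.cong refl) (simp add: ip_ind)
  also have "\<dots> = real (Qn K)" by (simp add: card_levels)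
  finally show ?thesis by linarith
qed

lemma mat_vec_scale: "mat_vec K V (\<lambda>z. r * x z) z = r * mat_vec K V x z"
  unfolding mat_vec_def by (simp add: sum_distrib_left mult_ac)

lemma ip_scale: "ip K (\<lambda>z. r * x z) (\<lambda>z. r * x z) = r\<^sup>2 * ip K x x"
  unfolding ip_def by (simp add: sum_distrib_left mult_ac power2_eq_square)

lemma unit_eigvec:
  assumes "c \<in> eigenvalues K V"
  shows "\<exists>v. ip K v v = 1 \<and> (\<forall>z\<in>levels K. mat_vec K V v z = c * v z)"
proof -
  obtain x z0 where z0: "z0 \<in> levels K" "x z0 \<noteq> 0" and e: "\<forall>z\<in>levels K. mat_vec K V x z = c * x z"
    using assms unfolding eigenvalues_def by blast
  have p: "ip K x x > 0" by (rule ip_pos[where z=z0 and K=K and x=x, OF z0])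
  define r where "r = 1 / sqrt (ip K x x)"
  have "r\<^sup>2 * ip K x x = 1" using p unfolding r_def by (simp add: power_divide)
  then show ?thesis
    by (intro exI[of _ "\<lambda>z. r * x z"]) (simp add: ip_scale mat_vec_scale e)
qed

lemma eigenvalues_finite:
  assumes sym: "symm K V"
  shows "finite (eigenvalues K V)"
proof (rule ccontr)
  assume inf: "infinite (eigenvalues K V)"
  define P where "P c v \<longleftrightarrow> ip K v v = 1 \<and> (\<forall>z\<in>levels K. mat_vec K V v z = c * v z)" for c v
  define v where "v c = (SOME v. P c v)" for c
  have v: "ip K (v c) (v c) = 1 \<and> (\<forall>z\<in>levels K. mat_vec K V (v c) z = c * v c z)"
    if "c \<in> eigenvalues K V" for c
  proof -
    have "\<exists>v. P c v" using unit_eigvec[OF that] unfolding P_def .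
    then have "P c (v c)" unfolding v_def by (rule someI_ex)
    then show ?thesis unfolding P_def .
  qed
  obtain F where F: "F \<subseteq> eigenvalues K V" "finite F" "card F = Suc (Qn K)"
    using infinite_arbitrarily_large[OF inf] by blast
  have "card F \<le> Qn K"
  proof (rule orthonormal_card[OF F(2)])
    fix c d assume "c \<in> F" "d \<in> F"
    then have c: "c \<in> eigenvalues K V" and d: "d \<in> eigenvalues K V" using F by auto
    show "ip K (v c) (v d) = (if c = d then 1 else 0)"
    proof (cases "c = d")
      case True then show ?thesis using v[OF c] by simp
    next
      case False then show ?thesis using eig_orth[OF sym _ _ False, of "v c" "v d"] v[OF c] v[OF d] by simp
    qed
  qed
  then show False using F by simp
qed

lemma spectral_summary:
  assumes sym: "symm K V" and ns: "nonsingular K V" and psd: "\<And>x. quad K V x \<ge> 0"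
  shows "Min (eigenvalues K V) > 0"
    and "\<And>x. quad K V x \<le> Max (eigenvalues K V) * ip K x x"
    and "\<And>x. Min (eigenvalues K V) * ip K x x \<le> quad K V x"
proof -
  let ?E = "eigenvalues K V"
  have fin: "finite ?E" by (rule eigenvalues_finite[OF sym])
  obtain u M where u: "ip K u u = 1" "\<forall>x. quad K V x \<le> M * ip K x x"
    "\<forall>z\<in>levels K. mat_vec K V u z = M * u z" using rayleigh_max[OF sym] by blast
  obtain w m where w: "ip K w w = 1" "\<forall>x. m * ip K x x \<le> quad K V x"
    "\<forall>z\<in>levels K. mat_vec K V w z = m * w z" using rayleigh_min[OF sym] by blast
  have nz: "\<exists>z\<in>levels K. x z \<noteq> 0" if "ip K x x = 1" for x
  proof (rule ccontr)
    assume "\<not> (\<exists>z\<in>levels K. x z \<noteq> 0)"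
    then have "ip K x x = 0" unfolding ip_def by simp
    with that show False by simp
  qed
  have ME: "M \<in> ?E" unfolding eigenvalues_def using u nz[OF u(1)] by blast
  have mE: "m \<in> ?E" unfolding eigenvalues_def using w nz[OF w(1)] by blast
  have bnd: "m \<le> c \<and> c \<le> M" if cE: "c \<in> ?E" for c
  proof -
    obtain x z0 where z0: "z0 \<in> levels K" "x z0 \<noteq> 0" and e: "\<forall>z\<in>levels K. mat_vec K V x z = c * x z"
      using cE unfolding eigenvalues_def by blast
    have p: "ip K x x > 0" by (rule ip_pos[where z=z0 and K=K and x=x, OF z0])
    have q: "quad K V x = c * ip K x x" by (rule eig_quad[OF e])
    have "c * ip K x x \<le> M * ip K x x" using u(2)[rule_format, of x] q by simp
    moreover have "m * ip K x x \<le> c * ip K x x" using w(2)[rule_format, of x] q by simp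
    ultimately show ?thesis using p by simp
  qed
  have Max: "Max ?E = M" by (rule Max_eqI[OF fin]) (use bnd ME in auto)
  have Min: "Min ?E = m" by (rule Min_eqI[OF fin]) (use bnd mE in auto)
  have m0: "m \<ge> 0" using psd[of w] eig_quad[OF w(3)] w(1) by simp
  have "m \<noteq> 0"
  proof
    assume "m = 0"
    then have "\<forall>z\<in>levels K. mat_vec K V w z = 0" using w(3) by simp
    then have "\<forall>z\<in>levels K. w z = 0" using ns unfolding nonsingular_def by blast
    then have "ip K w w = 0" unfolding ip_def by simp
    then show False using w(1) by simp
  qed
  then show "Min ?E > 0" using m0 Min by simp
  show "\<And>x. quad K V x \<le> Max ?E * ip K x x" using u(2) Max by simp
  show "\<And>x. Min ?E * ip K x x \<le> quad K V x" using w(2) Min by simp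
qed

lemma Qn_pos: "real (Qn K) > 0" by (simp add: Qn_def)

definition cf :: "nat \<Rightarrow> nat set \<Rightarrow> (bool list \<Rightarrow> real) \<Rightarrow> real" where
  "cf K A f = (\<Sum>z\<in>levels K. gvec A z * f z)"

lemma proj_eq: "proj K M f = (\<lambda>z. \<Sum>B\<in>M. (cf K B f / real (Qn K)) * gvec B z)"
  unfolding proj_def cf_def by (auto simp: sum_distrib_left sum_divide_distrib mult_ac)

lemma ip_g_proj:
  assumes M: "M \<subseteq> Pow {0..<K}" and A: "A \<subseteq> {0..<K}"
  shows "ip K (gvec A) (proj K M f) = (if A \<in> M then cf K A f else 0)"
proof -
  have fM: "finite M" using M finite_subset by (metis finite_Pow_iff finite_atLeastLessThan)
  have "ip K (gvec A) (proj K M f) = (\<Sum>B\<in>M. (cf K B f / real (Qn K)) * ip K (gvec A) (gvec B))"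
    unfolding proj_eq by (rule ip_lin)
  also have "\<dots> = (\<Sum>B\<in>M. if B = A then cf K A f else 0)"
  proof (intro sum.cong refl)
    fix B assume "B \<in> M"
    then have "B \<subseteq> {0..<K}" using M by auto
    then have "ip K (gvec A) (gvec B) = (if A = B then real (Qn K) else 0)"
      unfolding ip_def using gvec_orth[OF A] by simp
    then show "cf K B f / real (Qn K) * ip K (gvec A) (gvec B) = (if B = A then cf K A f else 0)"
      using Qn_pos[of K] by auto
  qed
  also have "\<dots> = (if A \<in> M then cf K A f else 0)" using fM by simp
  finally show ?thesis .
qed

lemma ip_proj_proj:
  assumes M: "M \<subseteq> Pow {0..<K}"
  shows "ip K (proj K M f) (proj K M f) = (\<Sum>B\<in>M. (cf K B f)\<^sup>2) / real (Qn K)"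
proof -
  have "ip K (proj K M f) (proj K M f) = (\<Sum>B\<in>M. (cf K B f / real (Qn K)) * ip K (proj K M f) (gvec B))"
    by (subst (2) proj_eq) (rule ip_lin)
  also have "\<dots> = (\<Sum>B\<in>M. (cf K B f)\<^sup>2 / real (Qn K))"
  proof (intro sum.cong refl)
    fix B assume "B \<in> M"
    then have "ip K (proj K M f) (gvec B) = cf K B f"
      using ip_g_proj[OF M, of B f] M ip_comm[of K "proj K M f"] by auto
    then show "cf K B f / real (Qn K) * ip K (proj K M f) (gvec B) = (cf K B f)\<^sup>2 / real (Qn K)"
      by (simp add: power2_eq_square)
  qed
  finally show ?thesis by (simp add: sum_divide_distrib)
qed

lemma cf_bound: "(cf K A f)\<^sup>2 \<le> real (card {z\<in>levels K. f z \<noteq> 0}) * ip K f f"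
proof -
  let ?S = "{z\<in>levels K. f z \<noteq> 0}"
  have c: "cf K A f = (\<Sum>z\<in>?S. gvec A z * f z)"
    unfolding cf_def by (rule sum.mono_neutral_right) auto
  have i: "ip K f f = (\<Sum>z\<in>?S. (f z)\<^sup>2)"
    unfolding ip_def power2_eq_square by (rule sum.mono_neutral_right) auto
  have g: "(\<Sum>z\<in>?S. (gvec A z)\<^sup>2) = real (card ?S)"
    using gvec_sq by (simp add: power2_eq_square)
  show ?thesis unfolding c i g[symmetric] by (rule Cauchy_Schwarz_ineq_sum)
qed

lemma quad_expand:
  assumes V: "\<forall>z\<in>levels K. \<forall>z'\<in>levels K. V z z' = (\<Sum>W\<in>A. a z W * l W * a z' W) / c"
  shows "quad K V x = (\<Sum>W\<in>A. l W * (\<Sum>z\<in>levels K. x z * a z W)\<^sup>2) / c"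
proof -
  have "(\<Sum>W\<in>A. l W * ((\<Sum>z\<in>levels K. x z * a z W) * (\<Sum>z'\<in>levels K. x z' * a z' W)))
      = (\<Sum>W\<in>A. \<Sum>z\<in>levels K. \<Sum>z'\<in>levels K. l W * (x z * a z W * (x z' * a z' W)))"
    by (intro sum.cong refl) (simp only: sum_product, simp only: sum_distrib_left)
  also have "\<dots> = (\<Sum>z\<in>levels K. \<Sum>W\<in>A. \<Sum>z'\<in>levels K. l W * (x z * a z W * (x z' * a z' W)))"
    by (rule sum.swap)
  also have "\<dots> = (\<Sum>z\<in>levels K. \<Sum>z'\<in>levels K. \<Sum>W\<in>A. l W * (x z * a z W * (x z' * a z' W)))"
    by (rule sum.cong[OF refl], rule sum.swap)
  also have "\<dots> = (\<Sum>z\<in>levels K. \<Sum>z'\<in>levels K. x z * (\<Sum>W\<in>A. a z W * l W * a z' W) * x z')"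
    by (simp add: sum_distrib_left sum_distrib_right mult_ac)
  finally have ch: "(\<Sum>W\<in>A. l W * ((\<Sum>z\<in>levels K. x z * a z W) * (\<Sum>z'\<in>levels K. x z' * a z' W)))
      = (\<Sum>z\<in>levels K. \<Sum>z'\<in>levels K. x z * (\<Sum>W\<in>A. a z W * l W * a z' W) * x z')" .
  have "quad K V x = (\<Sum>z\<in>levels K. \<Sum>z'\<in>levels K. x z * (\<Sum>W\<in>A. a z W * l W * a z' W) * x z' / c)"
    unfolding quad_def using V by (intro sum.cong refl) simp
  also have "\<dots> = (\<Sum>z\<in>levels K. \<Sum>z'\<in>levels K. x z * (\<Sum>W\<in>A. a z W * l W * a z' W) * x z') / c"
    by (simp add: sum_divide_distrib)
  also have "\<dots> = (\<Sum>W\<in>A. l W * ((\<Sum>z\<in>levels K. x z * a z W) * (\<Sum>z'\<in>levels K. x z' * a z' W))) / c"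
    by (simp only: ch)
  finally show ?thesis by (simp add: power2_eq_square)
qed

lemma ratio_le1: "(0::real) \<le> a \<Longrightarrow> a \<le> b \<Longrightarrow> a / b \<le> 1"
  by (cases "b = 0") auto

lemma Mstar_sub: "Mstar K N Y \<subseteq> Pow {0..<K}"
  unfolding Mstar_def by auto

lemma part1:
  assumes psd: "\<And>x. quad K V x \<ge> 0"
    and V: "\<forall>z\<in>levels K. \<forall>z'\<in>levels K.
         V z z' = (\<Sum>KK\<in>Pow {0..<K}. gvec KK z * \<Lambda> KK * gvec KK z') / real (Qn K)"
    and M: "M \<subseteq> Pow {0..<K}"
  shows "quad K V (proj K M f) / quad K V f \<le> 1"
proof -
  let ?P = "Pow {0..<K}"
  have qe: "quad K V x = (\<Sum>B\<in>?P. \<Lambda> B * (\<Sum>z\<in>levels K. x z * gvec B z)\<^sup>2) / real (Qn K)" for x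
    by (rule quad_expand[where a = "\<lambda>z B. gvec B z"]) (use V in simp)
  have ipg: "(\<Sum>z\<in>levels K. x z * gvec B z) = ip K (gvec B) x" for x B
    unfolding ip_def by (simp add: mult.commute)
  have lam: "\<Lambda> A \<ge> 0" if A: "A \<in> ?P" for A
  proof -
    have o: "(\<Sum>z\<in>levels K. gvec A z * gvec B z) = (if B = A then real (Qn K) else 0)" if "B \<in> ?P" for B
      using gvec_orth[of A K B] A that by auto
    have "quad K V (gvec A) = (\<Sum>B\<in>?P. \<Lambda> B * (if B = A then real (Qn K) else 0)\<^sup>2) / real (Qn K)"
      unfolding qe using o by simp
    also have "\<dots> = (\<Sum>B\<in>?P. if B = A then \<Lambda> A * (real (Qn K))\<^sup>2 else 0) / real (Qn K)"
      by (intro arg_cong[where f = "\<lambda>t. t / real (Qn K)"] sum.cong refl) auto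
    also have "\<dots> = \<Lambda> A * real (Qn K)"
      using A Qn_pos[of K] by (simp add: power2_eq_square)
    finally have "\<Lambda> A * real (Qn K) \<ge> 0" using psd[of "gvec A"] by simp
    then show ?thesis using Qn_pos[of K] by (simp add: zero_le_mult_iff)
  qed
  have "quad K V (proj K M f) = (\<Sum>B\<in>?P. \<Lambda> B * (ip K (gvec B) (proj K M f))\<^sup>2) / real (Qn K)"
    unfolding qe ipg ..
  also have "\<dots> = (\<Sum>B\<in>?P. \<Lambda> B * (if B \<in> M then cf K B f else 0)\<^sup>2) / real (Qn K)"
    by (intro arg_cong[where f = "\<lambda>t. t / real (Qn K)"] sum.cong refl)
       (simp add: ip_g_proj[OF M])
  also have "\<dots> \<le> (\<Sum>B\<in>?P. \<Lambda> B * (cf K B f)\<^sup>2) / real (Qn K)"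
  proof (intro divide_right_mono sum_mono)
    fix B assume "B \<in> ?P"
    then have "\<Lambda> B \<ge> 0" by (rule lam)
    moreover have "(if B \<in> M then cf K B f else 0)\<^sup>2 \<le> (cf K B f)\<^sup>2" by simp
    ultimately show "\<Lambda> B * (if B \<in> M then cf K B f else 0)\<^sup>2 \<le> \<Lambda> B * (cf K B f)\<^sup>2"
      by (simp add: mult_left_mono)
  qed (use Qn_pos[of K] in simp)
  also have "\<dots> = quad K V f"
    unfolding qe by (simp add: cf_def mult.commute)
  finally show ?thesis using psd by (intro ratio_le1) auto
qed

lemma part2:
  assumes sym: "symm K V" and ns: "nonsingular K V" and psd: "\<And>x. quad K V x \<ge> 0"
    and M: "M \<subseteq> Pow {0..<K}"
  shows "quad K V (proj K M f) / quad K V f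
       \<le> kappa K V * real (card {z\<in>levels K. f z \<noteq> 0}) * real (card M) / real (Qn K)"
proof -
  let ?E = "eigenvalues K V"
  let ?s = "real (card {z\<in>levels K. f z \<noteq> 0})"
  let ?m = "real (card M)"
  let ?Q = "real (Qn K)"
  note sp = spectral_summary[OF sym ns psd]
  define lmax where "lmax = Max ?E"
  define lmin where "lmin = Min ?E"
  have lmin: "lmin > 0" using sp(1) unfolding lmin_def .
  have up: "quad K V x \<le> lmax * ip K x x" for x using sp(2) unfolding lmax_def .
  have lo: "lmin * ip K x x \<le> quad K V x" for x using sp(3) unfolding lmin_def .
  define e where "e = (\<lambda>z'. if z' = replicate K False then 1 else (0::real))"
  have "ip K e e = 1" unfolding e_def by (subst ip_ind) (simp_all add: levels_ne)
  then have "lmin \<le> lmax" using up[of e] lo[of e] by simp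
  then have lmax: "lmax > 0" using lmin by simp
  have kap: "kappa K V = lmax / lmin" unfolding kappa_def lmax_def lmin_def ..
  have Q: "?Q > 0" by (rule Qn_pos)
  have pp: "ip K (proj K M f) (proj K M f) \<le> ?m * (?s * ip K f f) / ?Q"
  proof -
    have "(\<Sum>B\<in>M. (cf K B f)\<^sup>2) \<le> ?m * (?s * ip K f f)"
      using cf_bound[of K _ f] by (intro sum_bounded_above) auto
    then show ?thesis unfolding ip_proj_proj[OF M] using Q by (simp add: divide_right_mono)
  qed
  have q1: "quad K V (proj K M f) \<le> lmax * (?m * (?s * ip K f f) / ?Q)"
    using up[of "proj K M f"] mult_left_mono[OF pp] lmax by (meson less_imp_le order_trans)
  have R0: "kappa K V * ?s * ?m / ?Q \<ge> 0" unfolding kap using lmax lmin Q by simp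
  show ?thesis
  proof (cases "ip K f f = 0")
    case True
    then have "quad K V (proj K M f) = 0" using q1 psd[of "proj K M f"] by simp
    then show ?thesis using R0 by simp
  next
    case False
    then have ipf: "ip K f f > 0" using ip_nonneg[of K f] by simp
    have q0: "quad K V f \<ge> lmin * ip K f f" by (rule lo)
    have q0p: "quad K V f > 0" using q0 lmin ipf by (meson mult_pos_pos order_less_le_trans)
    have "quad K V (proj K M f) \<le> kappa K V * ?s * ?m / ?Q * (lmin * ip K f f)"
    proof -
      have eq: "kappa K V * ?s * ?m / ?Q * (lmin * ip K f f) = lmax * (?m * (?s * ip K f f) / ?Q)"
        unfolding kap using lmin by (simp add: field_simps)
      show ?thesis unfolding eq by (rule q1)
    qed
    also have "\<dots> \<le> kappa K V * ?s * ?m / ?Q * quad K V f"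
      by (rule mult_left_mono[OF q0 R0])
    finally show ?thesis using q0p by (simp add: pos_divide_le_eq)
  qed
qed

theorem proposition1:
  fixes K N :: nat
    and n :: "bool list \<Rightarrow> nat"
    and Y :: "nat \<Rightarrow> bool list \<Rightarrow> real"
    and f :: "bool list \<Rightarrow> real"
  assumes arms: "\<forall>z\<in>levels K. n z \<ge> 2"
    and total: "(\<Sum>z\<in>levels K. n z) = N"
    and nonsing: "nonsingular K (VYhat K N n Y)"
  shows
    "((\<exists>\<Lambda> :: nat set \<Rightarrow> real. \<forall>z\<in>levels K. \<forall>z'\<in>levels K.
         VYhat K N n Y z z' =
           (\<Sum>KK\<in>Pow {0..<K}. gvec KK z * \<Lambda> KK * gvec KK z') / real (Qn K))
      \<longrightarrow> quad K (VYhat K N n Y) (proj K (Mstar K N Y) f) / quad K (VYhat K N n Y) f \<le> 1)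
     \<and>
     quad K (VYhat K N n Y) (proj K (Mstar K N Y) f) / quad K (VYhat K N n Y) f
       \<le> kappa K (VYhat K N n Y) * real (card {z\<in>levels K. f z \<noteq> 0})
           * real (card (Mstar K N Y)) / real (Qn K)"
proof
  show "(\<exists>\<Lambda> :: nat set \<Rightarrow> real. \<forall>z\<in>levels K. \<forall>z'\<in>levels K.
         VYhat K N n Y z z' =
           (\<Sum>KK\<in>Pow {0..<K}. gvec KK z * \<Lambda> KK * gvec KK z') / real (Qn K))
      \<longrightarrow> quad K (VYhat K N n Y) (proj K (Mstar K N Y) f) / quad K (VYhat K N n Y) f \<le> 1"
  proof
    assume "\<exists>\<Lambda> :: nat set \<Rightarrow> real. \<forall>z\<in>levels K. \<forall>z'\<in>levels K.
         VYhat K N n Y z z' =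
           (\<Sum>KK\<in>Pow {0..<K}. gvec KK z * \<Lambda> KK * gvec KK z') / real (Qn K)"
    then obtain \<Lambda> :: "nat set \<Rightarrow> real" where "\<forall>z\<in>levels K. \<forall>z'\<in>levels K.
         VYhat K N n Y z z' =
           (\<Sum>KK\<in>Pow {0..<K}. gvec KK z * \<Lambda> KK * gvec KK z') / real (Qn K)" by blast
    then show "quad K (VYhat K N n Y) (proj K (Mstar K N Y) f) / quad K (VYhat K N n Y) f \<le> 1"
      by (rule part1[OF VYhat_psd _ Mstar_sub])
  qed
  show "quad K (VYhat K N n Y) (proj K (Mstar K N Y) f) / quad K (VYhat K N n Y) f
       \<le> kappa K (VYhat K N n Y) * real (card {z\<in>levels K. f z \<noteq> 0})
           * real (card (Mstar K N Y)) / real (Qn K)"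
    by (rule part2[OF VYhat_symm nonsing VYhat_psd Mstar_sub])
qed

end
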